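(* Fix $g\ge0$ and $n\ge0$. There is a bijection between Dyck paths of semilength $n$ and height at most $g+1$ and quadruples $(m,L,R,M)$ such that - $m$ is a non-negative integer, - $L=(L_1,\dots,L_m)$ is an $m$-tuple of Dyck paths of height at most $\lfloor g/2\rfloor$, - $R=(R_1,\dots,R_m)$ is an $m$-tuple of Dyck paths of height at most $\lceil g/2\rceil$, - $M$ is a Dyck path of height at most $\lceil g/2\rceil$ if $m=0$, and of height exactly $\lceil g/2\rceil$ otherwise, and the sum of the semilengths of the Dyck paths in $L$, $R$ and $M$ is $n-m$.
   Context: A Dyck path of semilength $k\ge0$ is a lattice path from $(0,0)$ to $(2k,0)$ with steps $(1,1)$ and $(1,-1)$ never going below the $x$-axis (the empty path is the Dyck path of semilength $0$). Its height is the maximal $y$-coordinate it attains. *)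

theory Defs
  imports Main
begin

text \<open>A lattice path with steps (1,1) and (1,-1) is encoded as a list of booleans:
  True = up step (1,1), False = down step (1,-1).\<close>

definition level :: "bool list \<Rightarrow> int" where
  "level p = int (length (filter id p)) - int (length (filter Not p))"

definition dyck_path :: "bool list \<Rightarrow> bool" where
  "dyck_path p \<longleftrightarrow> level p = 0 \<and> (\<forall>i \<le> length p. level (take i p) \<ge> 0)"

definition semilength :: "bool list \<Rightarrow> nat" where
  "semilength p = length p div 2"

definition height :: "bool list \<Rightarrow> nat" where
  "height p = nat (Max {level (take i p) | i. i \<le> length p})"

definition dyck_bounded :: "nat \<Rightarrow> nat \<Rightarrow> bool list set" where
  "dyck_bounded n h = {p. dyck_path p \<and> semilength p = n \<and> height p \<le> h}"

definition quadruples :: "nat \<Rightarrow> nat \<Rightarrow>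
    (nat \<times> bool list list \<times> bool list list \<times> bool list) set" where
  "quadruples g n = {(m, L, R, M).
      length L = m \<and> length R = m
    \<and> (\<forall>P \<in> set L. dyck_path P \<and> height P \<le> g div 2)
    \<and> (\<forall>P \<in> set R. dyck_path P \<and> height P \<le> (g + 1) div 2)
    \<and> dyck_path M
    \<and> (if m = 0 then height M \<le> (g + 1) div 2 else height M = (g + 1) div 2)
    \<and> (\<Sum>P\<leftarrow>L. semilength P) + (\<Sum>P\<leftarrow>R. semilength P) + semilength M + m = n}"

end

theory Submission
  imports Defs
begin
lemma level_Nil[simp]: "level [] = 0" by (simp add: level_def)
lemma level_Cons[simp]: "level (x#p) = (if x then 1 else -1) + level p" by (simp add: level_def)
lemma level_append[simp]: "level (p@q) = level p + level q" by (induct p) auto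
lemma level_map_Not[simp]: "level (map Not p) = - level p" by (induct p) auto

fun ok :: "int \<Rightarrow> int \<Rightarrow> int \<Rightarrow> bool list \<Rightarrow> bool" where
  "ok lo hi s [] = (lo \<le> s \<and> s \<le> hi)"
| "ok lo hi s (x#p) = (lo \<le> s \<and> s \<le> hi \<and> ok lo hi (if x then s+1 else s-1) p)"

lemma ok_start: "ok lo hi s p \<Longrightarrow> lo \<le> s \<and> s \<le> hi" by (cases p) auto
lemma ok_append: "ok lo hi s (a@b) \<longleftrightarrow> ok lo hi s a \<and> ok lo hi (s + level a) b"
  by (induct a arbitrary: s) (auto dest: ok_start simp: algebra_simps)
lemma ok_shift: "ok lo hi s p \<longleftrightarrow> ok (lo+c) (hi+c) (s+c) p"
  by (induct p arbitrary: s) (auto simp: algebra_simps)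
lemma ok_flip: "ok lo hi s (map Not p) \<longleftrightarrow> ok (-hi) (-lo) (-s) p"
  by (induct p arbitrary: s) (auto simp: algebra_simps)
lemma ok_mono: "ok lo hi s p \<Longrightarrow> lo' \<le> lo \<Longrightarrow> hi \<le> hi' \<Longrightarrow> ok lo' hi' s p"
  by (induct p arbitrary: s) auto
lemma ok_end: "ok lo hi s p \<Longrightarrow> lo \<le> s + level p \<and> s + level p \<le> hi"
proof (induct p arbitrary: s)
  case (Cons x p)
  have "ok lo hi (if x then s+1 else s-1) p" using Cons.prems by simp
  from Cons.hyps[OF this] show ?case by (cases x) simp_all
qed auto

lemma ok_iff: "ok lo hi s p \<longleftrightarrow> (\<forall>i\<le>length p. lo \<le> s + level (take i p) \<and> s + level (take i p) \<le> hi)"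
proof (induct p arbitrary: s)
  case Nil then show ?case by simp
next
  case (Cons x p)
  define s' where "s' = (if x then s+1 else s-1)"
  have eq: "\<And>j. s + level (take (Suc j) (x#p)) = s' + level (take j p)"
    unfolding s'_def by (cases x) simp_all
  have "(\<forall>i\<le>length (x#p). lo \<le> s + level (take i (x#p)) \<and> s + level (take i (x#p)) \<le> hi)
     \<longleftrightarrow> (lo \<le> s \<and> s \<le> hi) \<and> (\<forall>j\<le>length p. lo \<le> s + level (take (Suc j) (x#p)) \<and> s + level (take (Suc j) (x#p)) \<le> hi)"
    (is "?A \<longleftrightarrow> ?B")
  proof
    assume A: ?A
    have "lo \<le> s + level (take 0 (x#p)) \<and> s + level (take 0 (x#p)) \<le> hi" using A by blast
    moreover have "\<forall>j\<le>length p. lo \<le> s + level (take (Suc j) (x#p)) \<and> s + level (take (Suc j) (x#p)) \<le> hi"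
    proof (intro allI impI)
      fix j assume "j \<le> length p"
      then have "Suc j \<le> length (x#p)" by simp
      then show "lo \<le> s + level (take (Suc j) (x#p)) \<and> s + level (take (Suc j) (x#p)) \<le> hi" using A by blast
    qed
    ultimately show ?B by simp
  next
    assume B: ?B
    show ?A
    proof (intro allI impI)
      fix i assume i: "i \<le> length (x#p)"
      show "lo \<le> s + level (take i (x#p)) \<and> s + level (take i (x#p)) \<le> hi"
      proof (cases i)
        case 0 then show ?thesis using B by simp
      next
        case (Suc j) then have "j \<le> length p" using i by simp
        then show ?thesis using B Suc by blast
      qed
    qed
  qed
  also have "\<dots> \<longleftrightarrow> (lo \<le> s \<and> s \<le> hi) \<and> (\<forall>j\<le>length p. lo \<le> s' + level (take j p) \<and> s' + level (take j p) \<le> hi)"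
    by (simp only: eq)
  also have "\<dots> \<longleftrightarrow> (lo \<le> s \<and> s \<le> hi) \<and> ok lo hi s' p" using Cons[of s'] by simp
  also have "\<dots> \<longleftrightarrow> ok lo hi s (x#p)" unfolding s'_def by simp
  finally show ?case by simp
qed

lemma height_le: "height p \<le> k \<longleftrightarrow> (\<forall>i\<le>length p. level (take i p) \<le> int k)"
proof -
  let ?S = "{level (take i p) | i. i \<le> length p}"
  have S: "?S = (\<lambda>i. level (take i p)) ` {..length p}" by auto
  have fin: "finite ?S" unfolding S by simp
  have ne: "?S \<noteq> {}" by auto
  have "height p \<le> k \<longleftrightarrow> Max ?S \<le> int k" unfolding height_def by (simp add: nat_le_iff)
  also have "\<dots> \<longleftrightarrow> (\<forall>x\<in>?S. x \<le> int k)" using fin ne by simp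
  finally show ?thesis by auto
qed

lemma dyck_height: "dyck_path p \<and> height p \<le> k \<longleftrightarrow> level p = 0 \<and> ok 0 (int k) 0 p"
  unfolding dyck_path_def height_le ok_iff by auto

lemma len_even: "level p = 0 \<Longrightarrow> length p = 2 * semilength p"
proof -
  assume "level p = 0"
  then have "length (filter id p) = length (filter Not p)" by (simp add: level_def)
  moreover have "length (filter id p) + length (filter (\<lambda>x. \<not> id x) p) = length p"
    by (rule sum_length_filter_compl)
  ultimately have "length p = 2 * length (filter Not p)" by simp
  then show ?thesis by (simp add: semilength_def)
qed

lemma up_ex: "ok lo hi s p \<Longrightarrow> \<not> ok lo c s p \<Longrightarrow> s \<le> c \<Longrightarrow>
   \<exists>a q. p = a @ True # q \<and> ok lo c s a \<and> s + level a = c"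
proof (induct p arbitrary: s)
  case Nil then show ?case by auto
next
  case (Cons x p)
  show ?case
  proof (cases "x \<and> s = c")
    case True then show ?thesis using Cons by (intro exI[of _ "[]"] exI[of _ p]) auto
  next
    case False
    let ?s = "if x then s+1 else s-1"
    have "ok lo hi ?s p" "\<not> ok lo c ?s p" "?s \<le> c" using Cons.prems False by auto
    from Cons.hyps[OF this] obtain a q where a: "p = a @ True # q" "ok lo c ?s a" "?s + level a = c" by blast
    have st: "lo \<le> s" "s \<le> hi" using Cons.prems(1) by auto
    have "x # p = (x#a) @ True # q" using a by simp
    moreover have "ok lo c s (x#a)" using a(2) st Cons.prems(3) by simp
    moreover have "s + level (x#a) = c" using a(3) by (cases x) simp_all
    ultimately show ?thesis by blast
  qed
qed

lemma up_uniq: "a @ True # q = a' @ True # q' \<Longrightarrow> ok lo c s a \<Longrightarrow> s + level a = c \<Longrightarrow>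
   ok lo c s a' \<Longrightarrow> s + level a' = c \<Longrightarrow> a = a'"
proof (induct a arbitrary: s a')
  case Nil then show ?case by (cases a') (auto dest: ok_start)
next
  case (Cons x a)
  note IH = Cons.hyps and P = Cons.prems
  show ?case
  proof (cases a')
    case Nil then show ?thesis using P by (auto dest: ok_start)
  next
    case (Cons y a1)
    note C = Cons
    show ?thesis
    proof -
      have xy: "x = y" and e: "a @ True # q = a1 @ True # q'" using P(1) C by auto
      have s1: "ok lo c (if x then s+1 else s-1) a" using P(2) by simp
      have s2: "(if x then s+1 else s-1) + level a = c" using P(3) by (cases x) auto
      have s3: "ok lo c (if x then s+1 else s-1) a1" using P(4) C xy by simp
      have s4: "(if x then s+1 else s-1) + level a1 = c" using P(5) C xy by (cases x) auto
      have "a = a1" by (rule IH[OF e s1 s2 s3 s4])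
      then show ?thesis using C xy by simp
    qed
  qed
qed

lemma down_ex: "ok lo hi s p \<Longrightarrow> \<not> ok c hi s p \<Longrightarrow> c \<le> s \<Longrightarrow>
   \<exists>a q. p = a @ False # q \<and> ok c hi s a \<and> s + level a = c"
proof (induct p arbitrary: s)
  case Nil then show ?case by auto
next
  case (Cons x p)
  show ?case
  proof (cases "\<not> x \<and> s = c")
    case True then show ?thesis using Cons by (intro exI[of _ "[]"] exI[of _ p]) auto
  next
    case False
    let ?s = "if x then s+1 else s-1"
    have "ok lo hi ?s p" "\<not> ok c hi ?s p" "c \<le> ?s" using Cons.prems False by auto
    from Cons.hyps[OF this] obtain a q where a: "p = a @ False # q" "ok c hi ?s a" "?s + level a = c" by blast
    have st: "lo \<le> s" "s \<le> hi" using Cons.prems(1) by auto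
    have "x # p = (x#a) @ False # q" using a by simp
    moreover have "ok c hi s (x#a)" using a(2) st Cons.prems(3) by simp
    moreover have "s + level (x#a) = c" using a(3) by (cases x) simp_all
    ultimately show ?thesis by blast
  qed
qed

lemma down_uniq: "a @ False # q = a' @ False # q' \<Longrightarrow> ok c hi s a \<Longrightarrow> s + level a = c \<Longrightarrow>
   ok c hi s a' \<Longrightarrow> s + level a' = c \<Longrightarrow> a = a'"
proof (induct a arbitrary: s a')
  case Nil then show ?case by (cases a') (auto dest: ok_start)
next
  case (Cons x a)
  note IH = Cons.hyps and P = Cons.prems
  show ?case
  proof (cases a')
    case Nil then show ?thesis using P by (auto dest: ok_start)
  next
    case (Cons y a1)
    note C = Cons
    show ?thesis
    proof -
      have xy: "x = y" and e: "a @ False # q = a1 @ False # q'" using P(1) C by auto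
      have s1: "ok c hi (if x then s+1 else s-1) a" using P(2) by simp
      have s2: "(if x then s+1 else s-1) + level a = c" using P(3) by (cases x) auto
      have s3: "ok c hi (if x then s+1 else s-1) a1" using P(4) C xy by simp
      have s4: "(if x then s+1 else s-1) + level a1 = c" using P(5) C xy by (cases x) auto
      have "a = a1" by (rule IH[OF e s1 s2 s3 s4])
      then show ?thesis using C xy by simp
    qed
  qed
qed

fun mid :: "bool list list \<Rightarrow> bool list list \<Rightarrow> bool list" where
  "mid (b#L) (r#R) = map Not r @ True # b @ False # mid L R"
| "mid _ _ = []"

definition goodL :: "int \<Rightarrow> int \<Rightarrow> bool list list \<Rightarrow> bool" where
  "goodL h t L = (\<forall>b\<in>set L. ok (h+1) t (h+1) b \<and> level b = 0)"
definition goodR :: "int \<Rightarrow> bool list list \<Rightarrow> bool" where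
  "goodR h R = (\<forall>r\<in>set R. ok 0 h 0 r \<and> level r = 0)"

lemma flip_iff: "ok 0 h h (map Not r) \<longleftrightarrow> ok 0 h 0 r"
  using ok_flip[of 0 h h r] ok_shift[of "-h" 0 "-h" r h] by simp

lemma map_Not_Not[simp]: "map Not (map Not r) = r" by (induct r) auto
lemma map_Not_Not2[simp]: "map (Not \<circ> Not) r = r" by (induct r) auto

lemma mid_props: "length L = length R \<Longrightarrow> goodL h t L \<Longrightarrow> goodR h R \<Longrightarrow> 0 \<le> h \<Longrightarrow> h < t \<Longrightarrow>
   ok 0 t h (mid L R) \<and> level (mid L R) = 0"
proof (induct L arbitrary: R)
  case Nil then show ?case by simp
next
  case (Cons b L)
  then obtain r R' where R: "R = r # R'" by (cases R) auto
  have b: "ok (h+1) t (h+1) b" "level b = 0" using Cons.prems(2) unfolding goodL_def by auto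
  have r: "ok 0 h 0 r" "level r = 0" using Cons.prems(3) R unfolding goodR_def by auto
  have IH: "ok 0 t h (mid L R') \<and> level (mid L R') = 0"
    using Cons.hyps[of R'] Cons.prems R unfolding goodL_def goodR_def by auto
  have r': "ok 0 t h (map Not r)" using r flip_iff[of h r] ok_mono[of 0 h h "map Not r" 0 t] Cons.prems by simp
  have b': "ok 0 t (h+1) b" using b ok_mono[of "h+1" t "h+1" b 0 t] Cons.prems by simp
  have "ok 0 t h (map Not r @ True # b @ False # mid L R')"
    using r' b' IH b r Cons.prems by (simp add: ok_append)
  moreover have "level (map Not r @ True # b @ False # mid L R') = 0" using IH b r by simp
  ultimately show ?case using R by simp
qed

lemma mid_not_low: "L \<noteq> [] \<Longrightarrow> length L = length R \<Longrightarrow> goodR h R \<Longrightarrow> \<not> ok 0 h h (mid L R @ M)"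
proof -
  assume "L \<noteq> []" "length L = length R" "goodR h R"
  then obtain b L' r R' where LR: "L = b # L'" "R = r # R'" by (cases L; cases R) auto
  have "level r = 0" using \<open>goodR h R\<close> LR unfolding goodR_def by auto
  show ?thesis
  proof
    assume "ok 0 h h (mid L R @ M)"
    then have "ok 0 h h (map Not r @ (True # (b @ False # mid L' R' @ M)))" using LR by simp
    then have "ok 0 h (h + level (map Not r)) (True # (b @ False # mid L' R' @ M))" by (simp only: ok_append)
    then have "ok 0 h (h+1) (b @ False # mid L' R' @ M)" using \<open>level r = 0\<close> by simp
    then show False using ok_start by fastforce
  qed
qed

lemma mid_len: "length L = length R \<Longrightarrow> goodL h t L \<Longrightarrow> goodR h R \<Longrightarrow>
  length (mid L R) = 2 * (sum_list (map semilength L) + sum_list (map semilength R) + length L)"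
proof (induct L arbitrary: R)
  case Nil then show ?case by simp
next
  case (Cons b L)
  then obtain r R' where R: "R = r # R'" by (cases R) auto
  have b: "level b = 0" using Cons.prems(2) unfolding goodL_def by auto
  have r: "level r = 0" using Cons.prems(3) R unfolding goodR_def by auto
  have IH: "length (mid L R') = 2 * (sum_list (map semilength L) + sum_list (map semilength R') + length L)"
    using Cons.hyps[of R'] Cons.prems R unfolding goodL_def goodR_def by auto
  show ?case using IH len_even[OF b] len_even[OF r] R by simp
qed

lemma Y_uniq: "mid L R @ M = mid L' R' @ M' \<Longrightarrow> length L = length R \<Longrightarrow> length L' = length R' \<Longrightarrow>
  goodL h t L \<Longrightarrow> goodR h R \<Longrightarrow> goodL h t L' \<Longrightarrow> goodR h R' \<Longrightarrow> ok 0 h h M \<Longrightarrow> ok 0 h h M' \<Longrightarrow>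
  L = L' \<and> R = R' \<and> M = M'"
proof (induct L arbitrary: R L' R')
  case Nil
  then have R: "R = []" by simp
  show ?case
  proof (cases L')
    case Nil then show ?thesis using Nil.prems R by simp
  next
    case (Cons b' L1)
    then have "L' \<noteq> []" by simp
    from mid_not_low[OF this Nil.prems(3) Nil.prems(7), of M'] Nil.prems(1,8) R
    show ?thesis by simp
  qed
next
  case (Cons b L)
  note P = Cons.prems
  obtain r R1 where R: "R = r # R1" using P(2) by (cases R) auto
  show ?case
  proof (cases L')
    case Nil
    then have R': "R' = []" using P(3) by simp
    have "b # L \<noteq> []" by simp
    from mid_not_low[OF this P(2) P(5), of M] P(1,9) Nil R'
    show ?thesis by simp
  next
    case (Cons b' L1)
    then obtain r' R1' where R': "R' = r' # R1'" using P(3) by (cases R') auto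
    note C = Cons
    have b: "ok (h+1) t (h+1) b" "level b = 0" using P(4) unfolding goodL_def by auto
    have r: "ok 0 h 0 r" "level r = 0" using P(5) R unfolding goodR_def by auto
    have b': "ok (h+1) t (h+1) b'" "level b'= 0" using P(6) C unfolding goodL_def by auto
    have r': "ok 0 h 0 r'" "level r' = 0" using P(7) R' unfolding goodR_def by auto
    have e1: "map Not r @ True # (b @ False # mid L R1 @ M) = map Not r' @ True # (b' @ False # mid L1 R1' @ M')"
      using P(1) R R' C by simp
    have "map Not r = map Not r'"
      by (rule up_uniq[OF e1, of 0 h h]) (use r r' flip_iff in auto)
    then have rr: "r = r'" by (metis map_Not_Not)
    with e1 have e2: "b @ False # (mid L R1 @ M) = b' @ False # (mid L1 R1' @ M')" by simp
    have bb: "b = b'" by (rule down_uniq[OF e2, of "h+1" t "h+1"]) (use b b' in auto)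
    with e2 have e3: "mid L R1 @ M = mid L1 R1' @ M'" by simp
    have "L = L1 \<and> R1 = R1' \<and> M = M'"
      by (rule Cons.hyps[OF e3]) (use P R R' C in \<open>auto simp: goodL_def goodR_def\<close>)
    then show ?thesis using rr bb R R' C by simp
  qed
qed

lemma Y_ex: "ok 0 t h Y \<Longrightarrow> level Y \<le> 0 \<Longrightarrow> 0 \<le> h \<Longrightarrow> h < t \<Longrightarrow>
  \<exists>L R M. Y = mid L R @ M \<and> length L = length R \<and> goodL h t L \<and> goodR h R \<and> ok 0 h h M"
proof (induct "length Y" arbitrary: Y rule: less_induct)
  case less
  show ?case
  proof (cases "ok 0 h h Y")
    case True
    then show ?thesis by (intro exI[of _ "[]"] exI[of _ Y]) (simp add: goodL_def goodR_def)
  next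
    case False
    from up_ex[OF less.prems(1) False] obtain W Y1 where
      W: "Y = W @ True # Y1" "ok 0 h h W" "h + level W = h" by auto
    have Y1: "ok 0 t (h+1) Y1" using less.prems(1) W by (simp add: ok_append)
    have lY1: "level Y1 \<le> -1" using less.prems(2) W by simp
    have "\<not> ok (h+1) t (h+1) Y1" using ok_end[of "h+1" t "h+1" Y1] lY1 by auto
    from down_ex[OF Y1 this] obtain B Y2 where
      B: "Y1 = B @ False # Y2" "ok (h+1) t (h+1) B" "h + 1 + level B = h + 1" by auto
    have Y2: "ok 0 t h Y2" using Y1 B by (simp add: ok_append)
    have lY2: "level Y2 \<le> 0" using less.prems(2) W B by simp
    have "length Y2 < length Y" using W B by simp
    from less.hyps[OF this Y2 lY2 less.prems(3,4)] obtain L R M where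
      LRM: "Y2 = mid L R @ M" "length L = length R" "goodL h t L" "goodR h R" "ok 0 h h M" by blast
    have "Y = mid (B # L) (map Not W # R) @ M" using W B LRM by (simp add: comp_def)
    moreover have "goodL h t (B # L)" using LRM B unfolding goodL_def by auto
    moreover have "goodR h (map Not W # R)" using LRM W flip_iff[of h "map Not W"]
      unfolding goodR_def by auto
    ultimately show ?thesis using LRM by (intro exI[of _ "B#L"] exI[of _ "map Not W # R"] exI[of _ M]) auto
  qed
qed

definition fr :: "int \<Rightarrow> bool list \<Rightarrow> bool" where
  "fr h a \<longleftrightarrow> (h = 0 \<and> a = []) \<or> (0 < h \<and> (\<exists>a'. a = a' @ [True] \<and> ok 0 (h-1) 0 a' \<and> level a' = h-1))"

lemma fr_props: "fr h a \<Longrightarrow> ok 0 h 0 a \<and> level a = h"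
proof -
  assume "fr h a"
  then consider "h = 0" "a = []" | a' where "0 < h" "a = a' @ [True]" "ok 0 (h-1) 0 a'" "level a' = h-1"
    unfolding fr_def by blast
  then show ?thesis
  proof cases
    case 1 then show ?thesis by simp
  next
    case 2
    have "ok 0 h 0 a'" using 2 ok_mono[of 0 "h-1" 0 a' 0 h] by simp
    then show ?thesis using 2 by (simp add: ok_append)
  qed
qed

lemma fr_uniq: "a @ q = a' @ q' \<Longrightarrow> fr h a \<Longrightarrow> fr h a' \<Longrightarrow> a = a'"
proof -
  assume e: "a @ q = a' @ q'" and f: "fr h a" "fr h a'"
  show "a = a'"
  proof (cases "h = 0")
    case True then show ?thesis using f unfolding fr_def by auto
  next
    case False
    then obtain a0 a1 where A: "a = a0 @ [True]" "ok 0 (h-1) 0 a0" "level a0 = h-1"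
      "a' = a1 @ [True]" "ok 0 (h-1) 0 a1" "level a1 = h-1" using f unfolding fr_def by auto
    have "a0 @ True # q = a1 @ True # q'" using e A by simp
    from up_uniq[OF this A(2) _ A(5)] A show ?thesis by simp
  qed
qed

lemma fr_ex: "ok 0 t 0 M \<Longrightarrow> 0 \<le> h \<Longrightarrow> (0 < h \<Longrightarrow> \<not> ok 0 (h-1) 0 M) \<Longrightarrow> \<exists>a q. M = a @ q \<and> fr h a"
proof -
  assume M: "ok 0 t 0 M" and h: "0 \<le> h" and r: "0 < h \<Longrightarrow> \<not> ok 0 (h-1) 0 M"
  show ?thesis
  proof (cases "h = 0")
    case True then show ?thesis unfolding fr_def by auto
  next
    case False
    with h r have "\<not> ok 0 (h-1) 0 M" "0 \<le> h - 1" by auto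
    from up_ex[OF M this] obtain a q where "M = a @ True # q" "ok 0 (h-1) 0 a" "level a = h-1" by auto
    then show ?thesis using False h unfolding fr_def by (intro exI[of _ "a @ [True]"] exI[of _ q]) auto
  qed
qed

lemma fr_high: "fr h a \<Longrightarrow> 0 < h \<Longrightarrow> \<not> ok 0 (h-1) 0 (a @ q)"
  using fr_props[of h a] ok_end[of 0 "h-1" 0 a] by (auto simp: ok_append)


theorem lemma3p11:
  fixes g n :: nat
  shows "\<exists>f. bij_betw f (dyck_bounded n (g + 1)) (quadruples g n)"
proof -
  define h where "h = int ((g+1) div 2)"
  define t where "t = int (g+1)"
  have h0: "0 \<le> h" and ht: "h < t" unfolding h_def t_def by auto
  have gl: "int (g div 2) + (h+1) = t" unfolding h_def t_def by presburger
  have Lchar: "\<And>P. (dyck_path P \<and> height P \<le> g div 2) \<longleftrightarrow> (ok (h+1) t (h+1) P \<and> level P = 0)"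
  proof -
    fix P
    have "ok 0 (int (g div 2)) 0 P \<longleftrightarrow> ok (0 + (h+1)) (int (g div 2) + (h+1)) (0 + (h+1)) P"
      by (rule ok_shift)
    then show "(dyck_path P \<and> height P \<le> g div 2) \<longleftrightarrow> (ok (h+1) t (h+1) P \<and> level P = 0)"
      using dyck_height[of P "g div 2"] gl by auto
  qed
  have Rchar: "\<And>P. (dyck_path P \<and> height P \<le> (g+1) div 2) \<longleftrightarrow> (ok 0 h 0 P \<and> level P = 0)"
    using dyck_height h_def by auto
  have Mexact: "\<And>P. (dyck_path P \<and> height P = (g+1) div 2) \<longleftrightarrow>
      (ok 0 h 0 P \<and> level P = 0 \<and> (0 < h \<longrightarrow> \<not> ok 0 (h-1) 0 P))"
  proof -
    fix P
    show "(dyck_path P \<and> height P = (g+1) div 2) \<longleftrightarrow>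
      (ok 0 h 0 P \<and> level P = 0 \<and> (0 < h \<longrightarrow> \<not> ok 0 (h-1) 0 P))"
    proof (cases "(g+1) div 2 = 0")
      case True
      then have "h = 0" unfolding h_def by simp
      then show ?thesis using Rchar[of P] True by auto
    next
      case False
      have e: "int ((g+1) div 2 - 1) = h - 1" using False unfolding h_def by simp
      have "height P = (g+1) div 2 \<longleftrightarrow> height P \<le> (g+1) div 2 \<and> \<not> height P \<le> (g+1) div 2 - 1"
        using False by auto
      have d2: "(dyck_path P \<and> height P \<le> (g+1) div 2 - 1) \<longleftrightarrow> (level P = 0 \<and> ok 0 (h - 1) 0 P)"
        using dyck_height[of P "(g+1) div 2 - 1"] e by simp
      have "0 < h" using False h_def by simp
      then show ?thesis using Rchar[of P] d2 \<open>height P = _ \<longleftrightarrow> _\<close> by blast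
    qed
  qed
  have Dchar: "\<And>p. p \<in> dyck_bounded n (g+1) \<longleftrightarrow> level p = 0 \<and> ok 0 t 0 p \<and> semilength p = n"
  proof -
    fix p
    have "dyck_path p \<and> height p \<le> g+1 \<longleftrightarrow> level p = 0 \<and> ok 0 t 0 p"
      using dyck_height[of p "g+1"] unfolding t_def by simp
    then show "p \<in> dyck_bounded n (g+1) \<longleftrightarrow> level p = 0 \<and> ok 0 t 0 p \<and> semilength p = n"
      unfolding dyck_bounded_def by blast
  qed
  have Qchar: "(m,L,R,M) \<in> quadruples g n \<longleftrightarrow> length L = m \<and> length R = m
      \<and> goodL h t L \<and> goodR h R \<and> level M = 0 \<and> ok 0 h 0 M \<and> (m \<noteq> 0 \<longrightarrow> 0 < h \<longrightarrow> \<not> ok 0 (h-1) 0 M)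
      \<and> sum_list (map semilength L) + sum_list (map semilength R) + semilength M + m = n" for m L R M
  proof -
    have A: "(\<forall>P \<in> set L. dyck_path P \<and> height P \<le> g div 2) \<longleftrightarrow> goodL h t L"
      unfolding goodL_def using Lchar by auto
    have B: "(\<forall>P \<in> set R. dyck_path P \<and> height P \<le> (g + 1) div 2) \<longleftrightarrow> goodR h R"
      unfolding goodR_def using Rchar by auto
    have C: "(dyck_path M \<and> (if m = 0 then height M \<le> (g + 1) div 2 else height M = (g + 1) div 2) \<and> S)
       \<longleftrightarrow> (level M = 0 \<and> ok 0 h 0 M \<and> (m \<noteq> 0 \<longrightarrow> 0 < h \<longrightarrow> \<not> ok 0 (h-1) 0 M)) \<and> S" for S
    proof (cases "m = 0")
      case True then show ?thesis using Rchar[of M] by auto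
    next
      case False then show ?thesis using Mexact[of M] by auto
    qed
    show ?thesis
      unfolding quadruples_def by (simp only: mem_Collect_eq prod.case A B C conj_assoc)
  qed
  define sp where "sp M = (SOME x. M = fst x @ snd x \<and> fr h (fst x))" for M
  have sp_eq: "sp M = (a, q)" if "M = a @ q" "fr h a" for M a q
  proof -
    have ex: "\<exists>x. M = fst x @ snd x \<and> fr h (fst x)" using that by (intro exI[of _ "(a,q)"]) simp
    from someI_ex[OF ex] have s: "M = fst (sp M) @ snd (sp M)" "fr h (fst (sp M))" unfolding sp_def by auto
    have "fst (sp M) = a" using fr_uniq[of "fst (sp M)" "snd (sp M)" a q h] s that by simp
    moreover then have "snd (sp M) = q" using s that by simp
    ultimately show ?thesis by (simp add: prod_eq_iff)
  qed
  have Msplit: "\<exists>a b. M = a @ b \<and> fr h a \<and> sp M = (a,b) \<and> ok 0 h h b \<and> ok 0 h 0 a \<and> level a = h"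
    if "ok 0 h 0 M" "0 < h \<longrightarrow> \<not> ok 0 (h-1) 0 M" for M
  proof -
    have hyp: "0 < h \<Longrightarrow> \<not> ok 0 (h-1) 0 M" using that(2) by blast
    from fr_ex[OF that(1) h0 hyp] obtain a b where ab: "M = a @ b" "fr h a" by blast
    have "ok 0 h 0 a" "level a = h" using fr_props[OF ab(2)] by auto
    moreover have "ok 0 h h b" using that(1) ab(1) calculation by (simp add: ok_append)
    ultimately show ?thesis using ab sp_eq[OF ab] by blast
  qed
  have notlow: "\<not> ok 0 h 0 (a @ mid L R @ b)"
    if "fr h a" "L \<noteq> []" "length L = length R" "goodR h R" for a L R b
  proof
    assume "ok 0 h 0 (a @ mid L R @ b)"
    then have "ok 0 h (0 + level a) (mid L R @ b)" by (simp add: ok_append)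
    then show False using mid_not_low[OF that(2-4), of b] fr_props[OF that(1)] by simp
  qed
  define G where "G q = (case q of (m,L,R,M) \<Rightarrow> if (m::nat) = 0 then M else fst (sp M) @ mid L R @ snd (sp M))" for q
  have inj: "inj_on G (quadruples g n)"
  proof (rule inj_onI)
    fix x y assume xQ: "x \<in> quadruples g n" and yQ: "y \<in> quadruples g n" and e: "G x = G y"
    obtain m1 L1 R1 M1 where x: "x = (m1,L1,R1,M1)" by (cases x) auto
    obtain m2 L2 R2 M2 where y: "y = (m2,L2,R2,M2)" by (cases y) auto
    note X = xQ[unfolded x Qchar] and Y = yQ[unfolded y Qchar]
    show "x = y"
    proof (cases "m1 = 0")
      case m1: True
      show ?thesis
      proof (cases "m2 = 0")
        case True then show ?thesis using m1 e X Y x y G_def by auto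
      next
        case False
        obtain a b where ab: "M2 = a @ b" "fr h a" "sp M2 = (a,b)" using Msplit[of M2] Y False by blast
        have "M1 = a @ mid L2 R2 @ b" using e x y m1 False ab G_def by simp
        moreover have "L2 \<noteq> []" using Y False by auto
        ultimately show ?thesis using notlow[OF ab(2), of L2 R2 b] X Y by auto
      qed
    next
      case m1: False
      obtain a1 b1 where ab1: "M1 = a1 @ b1" "fr h a1" "sp M1 = (a1,b1)" "ok 0 h h b1"
        using Msplit[of M1] X m1 by blast
      show ?thesis
      proof (cases "m2 = 0")
        case True
        have "M2 = a1 @ mid L1 R1 @ b1" using e x y m1 True ab1 G_def by simp
        moreover have "L1 \<noteq> []" using X m1 by auto
        ultimately show ?thesis using notlow[OF ab1(2), of L1 R1 b1] X Y by auto
      next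
        case False
        obtain a2 b2 where ab2: "M2 = a2 @ b2" "fr h a2" "sp M2 = (a2,b2)" "ok 0 h h b2"
          using Msplit[of M2] Y False by blast
        have e2: "a1 @ (mid L1 R1 @ b1) = a2 @ (mid L2 R2 @ b2)" using e x y m1 False ab1 ab2 G_def by simp
        have aa: "a1 = a2" using fr_uniq[OF e2 ab1(2) ab2(2)] .
        then have e3: "mid L1 R1 @ b1 = mid L2 R2 @ b2" using e2 by simp
        have "L1 = L2 \<and> R1 = R2 \<and> b1 = b2"
          by (rule Y_uniq[OF e3]) (use X Y ab1 ab2 in auto)
        then show ?thesis using aa ab1 ab2 x y X Y by auto
      qed
    qed
  qed
  have sub: "G ` quadruples g n \<subseteq> dyck_bounded n (g+1)"
  proof
    fix P assume "P \<in> G ` quadruples g n"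
    then obtain x where xQ: "x \<in> quadruples g n" and P: "P = G x" by blast
    obtain m L R M where x: "x = (m,L,R,M)" by (cases x) auto
    note X = xQ[unfolded x Qchar]
    show "P \<in> dyck_bounded n (g+1)"
    proof (cases "m = 0")
      case True
      then have "P = M" "L = []" "R = []" using P x G_def X by auto
      moreover have "ok 0 t 0 M" using X ok_mono[of 0 h 0 M 0 t] ht by auto
      ultimately show ?thesis unfolding Dchar using X True by auto
    next
      case False
      obtain a b where ab: "M = a @ b" "fr h a" "sp M = (a,b)" "ok 0 h h b" "ok 0 h 0 a" "level a = h"
        using Msplit[of M] X False by blast
      have P2: "P = a @ mid L R @ b" using P x False ab G_def by simp
      have mp: "ok 0 t h (mid L R) \<and> level (mid L R) = 0" using mid_props[of L R h t] X h0 ht by auto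
      have lP: "level P = 0" using P2 mp ab X by simp
      have okP: "ok 0 t 0 P" using P2 mp ab ok_mono[of 0 h 0 a 0 t] ok_mono[of 0 h h b 0 t] ht
        by (simp add: ok_append)
      have lM: "length M = 2 * semilength M" using len_even X by auto
      have lm: "length (mid L R) = 2 * (sum_list (map semilength L) + sum_list (map semilength R) + length L)"
        using mid_len[of L R h t] X by auto
      have "length P = 2 * n" using P2 lm lM ab(1) X by simp
      then have "semilength P = n" unfolding semilength_def by simp
      then show ?thesis unfolding Dchar using lP okP by auto
    qed
  qed
  have sup: "dyck_bounded n (g+1) \<subseteq> G ` quadruples g n"
  proof
    fix P assume "P \<in> dyck_bounded n (g+1)"
    then have D: "level P = 0" "ok 0 t 0 P" "semilength P = n" unfolding Dchar by auto
    show "P \<in> G ` quadruples g n"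
    proof (cases "ok 0 h 0 P")
      case True
      have "(0, [], [], P) \<in> quadruples g n" unfolding Qchar using D True by (simp add: goodL_def goodR_def)
      moreover have "G (0, [], [], P) = P" unfolding G_def by simp
      ultimately show ?thesis by (metis image_eqI)
    next
      case False
      have "0 < h \<Longrightarrow> \<not> ok 0 (h-1) 0 P" using False ok_mono[of 0 "h-1" 0 P 0 h] by auto
      from fr_ex[OF D(2) h0 this] obtain a Y where aY: "P = a @ Y" "fr h a" by blast
      have a: "ok 0 h 0 a" "level a = h" using fr_props[OF aY(2)] by auto
      have Y: "ok 0 t h Y" using D(2) aY a by (simp add: ok_append)
      have lY: "level Y \<le> 0" using D(1) aY a h0 by simp
      from Y_ex[OF Y lY h0 ht] obtain L R b where
        LR: "Y = mid L R @ b" "length L = length R" "goodL h t L" "goodR h R" "ok 0 h h b" by blast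
      have Lne: "L \<noteq> []"
      proof
        assume "L = []"
        then have "P = a @ b" using aY LR by simp
        then have "ok 0 h 0 P" using a LR by (simp add: ok_append)
        then show False using False by simp
      qed
      define M where "M = a @ b"
      have spM: "sp M = (a,b)" using sp_eq[of M a b] aY M_def by simp
      have mp: "level (mid L R) = 0" using mid_props[of L R h t] LR h0 ht by auto
      have lM: "level M = 0" using D(1) aY LR mp M_def by simp
      have okM: "ok 0 h 0 M" using a LR M_def by (simp add: ok_append)
      have hiM: "0 < h \<longrightarrow> \<not> ok 0 (h-1) 0 M" using fr_high[OF aY(2)] M_def by auto
      have lenM: "length M = 2 * semilength M" using len_even lM by auto
      have lm: "length (mid L R) = 2 * (sum_list (map semilength L) + sum_list (map semilength R) + length L)"
        using mid_len[of L R h t] LR by auto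
      have "length P = 2 * n" using len_even[OF D(1)] D(3) by simp
      moreover have "length P = length M + length (mid L R)" using aY LR M_def by simp
      ultimately have sums: "sum_list (map semilength L) + sum_list (map semilength R) + semilength M + length L = n"
        using lenM lm by simp
      have inQ: "(length L, L, R, M) \<in> quadruples g n"
        unfolding Qchar using LR lM okM hiM sums by auto
      have "G (length L, L, R, M) = P" unfolding G_def using Lne spM aY LR M_def by simp
      then show ?thesis using inQ by (metis image_eqI)
    qed
  qed
  have "bij_betw G (quadruples g n) (dyck_bounded n (g+1))"
    unfolding bij_betw_def using inj sub sup by blast
  then have "bij_betw (inv_into (quadruples g n) G) (dyck_bounded n (g+1)) (quadruples g n)"
    by (rule bij_betw_inv_into)
  then show ?thesis by blast
qed

end
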